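(* Let $T,B_1,B_3,\varepsilon>0$. The function $I_\varepsilon:Y\times X_{B_1}\to\mathbb{R}$, $$I_\varepsilon(\tilde\theta,\gamma)=\int_{(0,T)^2}\big((A_\varepsilon\tilde\theta)_{t_1}(\gamma_{t_1})-(A_\varepsilon\tilde\theta)_{t_2}(\gamma_{t_2})\big)^+\chi_{\{t_1<t_2\}}\,dt_1\,dt_2,$$ is continuous.
   Context: $X_{B_1}$: left-continuous $\gamma:(0,T)\to[0,1]$ with total variation $\le B_1$, metric $\|\cdot\|_{L^2(0,T)}$; $\gamma_t=\gamma(t)$. $Y_{B_3}$: nondecreasing $\theta:[0,1]\to\mathbb{R}$, right-continuous on $[0,1)$, $|\theta|\le B_3$, metric $\|\cdot\|_{L^2(0,1)}$. $Y=C([0,T);Y_{B_3})$ with metric $\sup_t\|\tilde\theta_t-\tilde\theta'_t\|_{L^2}$, $\tilde\theta_t=\tilde\theta(t)$. $A_\varepsilon:Y\to Y$ is $(A_\varepsilon\tilde\theta)_t(z)=\varepsilon^{-1}\int_z^{z+\varepsilon}\tilde\theta_t(w)\,dw$, where $\tilde\theta_t(w)$ is set equal to $B_3$ for $w\ge1$. *)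

theory Defs
  imports "HOL-Analysis.Analysis"
begin

definition L2dist :: "real \<Rightarrow> real \<Rightarrow> (real \<Rightarrow> real) \<Rightarrow> (real \<Rightarrow> real) \<Rightarrow> real" where
  "L2dist a b f g = sqrt (LINT w:{a<..<b}|lborel. (f w - g w)^2)"

definition tv_le :: "real \<Rightarrow> real \<Rightarrow> (real \<Rightarrow> real) \<Rightarrow> bool" where
  "tv_le T B g \<longleftrightarrow> (\<forall>(n::nat) (s::nat \<Rightarrow> real).
      (\<forall>i\<le>n. s i \<in> {0<..<T}) \<and> (\<forall>i<n. s i < s (Suc i)) \<longrightarrow>
      (\<Sum>i<n. \<bar>g (s (Suc i)) - g (s i)\<bar>) \<le> B)"

definition X_B :: "real \<Rightarrow> real \<Rightarrow> (real \<Rightarrow> real) set" where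
  "X_B T B1 = {g. (\<forall>t\<in>{0<..<T}. (g \<longlongrightarrow> g t) (at_left t))
                 \<and> (\<forall>t\<in>{0<..<T}. 0 \<le> g t \<and> g t \<le> 1)
                 \<and> tv_le T B1 g}"

definition Y_B :: "real \<Rightarrow> (real \<Rightarrow> real) set" where
  "Y_B B3 = {th. mono_on {0..1} th
                 \<and> (\<forall>z\<in>{0..<1}. (th \<longlongrightarrow> th z) (at_right z))
                 \<and> (\<forall>z\<in>{0..1}. \<bar>th z\<bar> \<le> B3)}"

text \<open>The space Y = C([0,T); Y_{B3}); thth t is the element at time t.\<close>
definition Yspace :: "real \<Rightarrow> real \<Rightarrow> (real \<Rightarrow> real \<Rightarrow> real) set" where
  "Yspace T B3 = {thth. (\<forall>t\<in>{0..<T}. thth t \<in> Y_B B3)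
     \<and> (\<forall>t\<in>{0..<T}. \<forall>e>0. \<exists>d>0. \<forall>s\<in>{0..<T}. \<bar>s - t\<bar> < d \<longrightarrow>
            L2dist 0 1 (thth s) (thth t) < e)}"

definition Ydist :: "real \<Rightarrow> (real \<Rightarrow> real \<Rightarrow> real) \<Rightarrow> (real \<Rightarrow> real \<Rightarrow> real) \<Rightarrow> real" where
  "Ydist T th1 th2 = (SUP t\<in>{0..<T}. L2dist 0 1 (th1 t) (th2 t))"

definition A_eps :: "real \<Rightarrow> real \<Rightarrow> (real \<Rightarrow> real \<Rightarrow> real) \<Rightarrow> real \<Rightarrow> real \<Rightarrow> real" where
  "A_eps B3 eps thth t z =
     (LINT w:{z..z+eps}|lborel. (if w \<ge> 1 then B3 else thth t w)) / eps"

definition I_eps :: "real \<Rightarrow> real \<Rightarrow> real \<Rightarrow> (real \<Rightarrow> real \<Rightarrow> real) \<Rightarrow> (real \<Rightarrow> real) \<Rightarrow> real" where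
  "I_eps T B3 eps thth g =
     (LINT p:({0<..<T} \<times> {0<..<T})|lborel.
        (if fst p < snd p then
           max 0 (A_eps B3 eps thth (fst p) (g (fst p)) - A_eps B3 eps thth (snd p) (g (snd p)))
         else 0))"

end

theory Submission
  imports Defs
begin





lemma si_bdd:
  fixes f :: "'a::euclidean_space \<Rightarrow> real"
  assumes "f \<in> borel_measurable borel" "bounded A" "A \<in> sets borel" "\<And>x. x\<in>A \<Longrightarrow> \<bar>f x\<bar> \<le> C"
  shows "set_integrable lborel A f"
  unfolding set_integrable_def
  apply (rule integrableI_bounded_set[where A=A and B=C])
  using assms emeasure_bounded_finite[OF assms(2)] by (auto simp: indicator_def)

definition hx :: "real \<Rightarrow> (real \<Rightarrow> real) \<Rightarrow> real \<Rightarrow> real" where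
  "hx B f w = (if 1 \<le> w then B else if 0 \<le> w then f w else 0)"

lemma Y_B_D: "f \<in> Y_B B \<Longrightarrow> mono_on {0..1} f" "f \<in> Y_B B \<Longrightarrow> z \<in> {0..1} \<Longrightarrow> \<bar>f z\<bar> \<le> B"
  by (auto simp: Y_B_def)

lemma Y_B_meas:
  assumes "f \<in> Y_B B"
  shows "(\<lambda>x. indicator {0..<1} x *\<^sub>R f x) \<in> borel_measurable borel"
proof -
  have "mono_on {0..<1} f" using Y_B_D(1)[OF assms] by (rule mono_on_subset) auto
  then have "f \<in> borel_measurable (restrict_space borel {0..<1})" by (rule borel_measurable_mono_on_fnc)
  then show ?thesis
    by (subst (asm) borel_measurable_restrict_space_iff) auto
qed

lemma hx_meas:
  assumes "f \<in> Y_B B"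
  shows "hx B f \<in> borel_measurable borel"
proof -
  have "hx B f = (\<lambda>w. (if 1 \<le> w then B else 0) + indicator {0..<1} w *\<^sub>R f w)"
    by (auto simp: hx_def fun_eq_iff indicator_def)
  then show ?thesis using Y_B_meas[OF assms] by simp
qed

lemma hx_bound: "f \<in> Y_B B \<Longrightarrow> B > 0 \<Longrightarrow> \<bar>hx B f w\<bar> \<le> B"
  by (auto simp: hx_def Y_B_def)

lemma hx_int: "f \<in> Y_B B \<Longrightarrow> B > 0 \<Longrightarrow> set_integrable lborel {a..b} (hx B f)"
  by (rule si_bdd[where C=B]) (auto intro: hx_meas hx_bound)

lemma A_hx:
  assumes "z \<ge> 0"
  shows "A_eps B eps th t z = (LINT w:{z..z+eps}|lborel. hx B (th t) w) / eps"
  unfolding A_eps_def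
  by (rule arg_cong[where f="\<lambda>x. x / eps"], rule set_lebesgue_integral_cong) (use assms in \<open>auto simp: hx_def\<close>)

lemma int_bound:
  fixes f :: "'a::euclidean_space \<Rightarrow> real"
  assumes "set_integrable lborel A f" "A \<in> sets borel" "emeasure lborel A < \<infinity>" "\<And>x. x\<in>A \<Longrightarrow> \<bar>f x\<bar> \<le> C"
  shows "\<bar>LINT x:A|lborel. f x\<bar> \<le> C * measure lborel A"
proof -
  have "\<bar>LINT x:A|lborel. f x\<bar> \<le> (LINT x:A|lborel. \<bar>f x\<bar>)"
    using set_integral_norm_bound[OF assms(1)] by simp
  also have "\<dots> \<le> (LINT x:A|lborel. C)"
    apply (rule set_integral_mono)
    using assms set_integrable_abs apply auto
    unfolding set_integrable_def
    apply (rule integrableI_bounded_set[where A=A and B="\<bar>C\<bar>"])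
    by (auto simp: indicator_def)
  also have "\<dots> = C * measure lborel A"
    using assms by (subst set_integral_const) auto
  finally show ?thesis .
qed

lemma hx_iint: "f \<in> Y_B B \<Longrightarrow> B > 0 \<Longrightarrow> interval_lebesgue_integrable lborel (ereal a) (ereal b) (hx B f)"
  unfolding interval_lebesgue_integrable_def
  by (auto intro!: si_bdd[where C=B] hx_meas hx_bound)

lemma min_ereal': "min (ereal a) (ereal b) = ereal (min a b)" "max (ereal a) (ereal b) = ereal (max a b)"
  by (auto simp: min_def max_def)

lemma lb_bound:
  assumes "f \<in> Y_B B" "B > 0"
  shows "\<bar>LBINT x=ereal a..ereal b. hx B f x\<bar> \<le> B * \<bar>b - a\<bar>"
proof -
  have *: "\<bar>LBINT x=ereal a..ereal b. hx B f x\<bar> \<le> B * \<bar>b - a\<bar>" if "a \<le> b" for a b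
  proof -
    have "\<bar>LBINT x=ereal a..ereal b. hx B f x\<bar> = \<bar>LINT x:{a..b}|lborel. hx B f x\<bar>"
      using that by (subst interval_integral_Icc) auto
    also have "\<dots> \<le> B * measure lborel {a..b}"
      by (rule int_bound) (use assms emeasure_bounded_finite[of "{a..b}"] in \<open>auto intro: hx_int hx_bound\<close>)
    finally show ?thesis using that by simp
  qed
  show ?thesis
  proof (cases "a \<le> b")
    case True then show ?thesis using * by auto
  next
    case False
    then show ?thesis using *[of b a]
      by (subst interval_integral_endpoints_reverse) auto
  qed
qed

lemma lb_sum:
  assumes "f \<in> Y_B B" "B > 0"
  shows "(LBINT x=ereal a..ereal b. hx B f x) + (LBINT x=ereal b..ereal c. hx B f x) = (LBINT x=ereal a..ereal c. hx B f x)"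
  by (rule interval_integral_sum) (unfold min_ereal', rule hx_iint[OF assms])


lemma A_lip:
  assumes "th t \<in> Y_B B" "B > 0" "eps > 0" "z \<ge> 0" "z' \<ge> 0"
  shows "\<bar>A_eps B eps th t z - A_eps B eps th t z'\<bar> \<le> 2 * B / eps * \<bar>z - z'\<bar>"
proof -
  let ?J = "\<lambda>a b. LBINT x=ereal a..ereal b. hx B (th t) x"
  have e1: "(LINT w:{z..z+eps}|lborel. hx B (th t) w) = ?J z (z+eps)" for z
    using assms by (subst interval_integral_Icc) auto
  have "?J z (z+eps) - ?J z' (z'+eps) = ?J z z' - ?J (z+eps) (z'+eps)"
    using lb_sum[OF assms(1,2), of z z' "z'+eps"] lb_sum[OF assms(1,2), of z "z+eps" "z'+eps"]
    by linarith
  also have "\<bar>\<dots>\<bar> \<le> B * \<bar>z' - z\<bar> + B * \<bar>(z'+eps) - (z+eps)\<bar>"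
    using lb_bound[OF assms(1,2), of z z'] lb_bound[OF assms(1,2), of "z+eps" "z'+eps"] by linarith
  finally have "\<bar>?J z (z+eps) - ?J z' (z'+eps)\<bar> \<le> 2 * B * \<bar>z - z'\<bar>" by (simp add: abs_minus_commute)
  then have f1: "\<bar>?J z (z+eps) - ?J z' (z'+eps)\<bar> / eps \<le> 2 * B * \<bar>z - z'\<bar> / eps"
    using assms by (simp add: divide_right_mono)
  have f2: "A_eps B eps th t z - A_eps B eps th t z' = (?J z (z+eps) - ?J z' (z'+eps)) / eps"
    using assms by (simp add: A_hx e1 diff_divide_distrib)
  have f3: "\<bar>(?J z (z+eps) - ?J z' (z'+eps)) / eps\<bar> = \<bar>?J z (z+eps) - ?J z' (z'+eps)\<bar> / eps"
    using assms by (simp add: abs_divide)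
  have f4: "2 * B / eps * \<bar>z - z'\<bar> = 2 * B * \<bar>z - z'\<bar> / eps" by simp
  show ?thesis by (simp only: f1 f2 f3 f4)
qed

lemma A_bound:
  assumes "th t \<in> Y_B B" "B > 0" "eps > 0" "z \<ge> 0"
  shows "\<bar>A_eps B eps th t z\<bar> \<le> B"
proof -
  have "\<bar>LINT w:{z..z+eps}|lborel. hx B (th t) w\<bar> \<le> B * measure lborel {z..z+eps}"
    by (rule int_bound) (use assms emeasure_bounded_finite[of "{z..z+eps}"] in \<open>auto intro: hx_int hx_bound\<close>)
  moreover have "measure lborel {z..z+eps} = eps" using assms by simp
  ultimately have "\<bar>LINT w:{z..z+eps}|lborel. hx B (th t) w\<bar> \<le> B * eps" by simp
  then have g1: "\<bar>LINT w:{z..z+eps}|lborel. hx B (th t) w\<bar> / eps \<le> B"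
    using assms by (simp add: divide_le_eq)
  have g2: "A_eps B eps th t z = (LINT w:{z..z+eps}|lborel. hx B (th t) w) / eps"
    by (rule A_hx) (use assms in auto)
  have g3: "\<bar>(LINT w:{z..z+eps}|lborel. hx B (th t) w) / eps\<bar> = \<bar>LINT w:{z..z+eps}|lborel. hx B (th t) w\<bar> / eps"
    using assms by (simp add: abs_divide)
  show ?thesis by (simp only: g1 g2 g3)
qed



lemma amgm: assumes "d > 0" shows "\<bar>a::real\<bar> \<le> a^2/(2*d) + d/2"
proof -
  have "0 \<le> (\<bar>a\<bar> - d)^2" by simp
  then have "2*d*\<bar>a\<bar> \<le> a^2 + d^2"
    by (simp add: power2_eq_square algebra_simps abs_mult_self)
  moreover have "a^2/(2*d) + d/2 = (a^2 + d^2)/(2*d)" using assms by (simp add: field_simps power2_eq_square)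
  ultimately show ?thesis using assms by (simp add: pos_le_divide_eq mult.commute)
qed

lemma l1_l2:
  fixes G :: "real \<Rightarrow> real"
  assumes "G \<in> borel_measurable borel" "bounded S" "S \<in> sets borel" "\<And>x. x\<in>S \<Longrightarrow> \<bar>G x\<bar> \<le> C" "d > 0"
  shows "(LINT x:S|lborel. \<bar>G x\<bar>) \<le> (LINT x:S|lborel. (G x)^2)/(2*d) + d/2 * measure lborel S"
proof -
  have fin: "emeasure lborel S < \<infinity>" using emeasure_bounded_finite[OF assms(2)] by simp
  have i1: "set_integrable lborel S (\<lambda>x. \<bar>G x\<bar>)"
    by (rule si_bdd[where C=C]) (use assms in auto)
  have i2: "set_integrable lborel S (\<lambda>x. (G x)^2)"
  proof (rule si_bdd[where C="C^2"])
    fix x assume "x \<in> S"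
    then have "\<bar>G x\<bar> \<le> C" using assms by auto
    then have "\<bar>G x\<bar>^2 \<le> C^2" by (metis abs_ge_zero power_mono)
    then show "\<bar>(G x)^2\<bar> \<le> C^2" by simp
  qed (use assms in auto)
  have i3: "set_integrable lborel S (\<lambda>x. d/2)"
    by (rule si_bdd[where C="d/2"]) (use assms in auto)
  have "(LINT x:S|lborel. \<bar>G x\<bar>) \<le> (LINT x:S|lborel. (G x)^2/(2*d) + d/2)"
    apply (rule set_integral_mono[OF i1])
    using i2 i3 apply (intro set_integral_add) apply auto[2]
    using amgm[OF assms(5)] by blast
  also have "\<dots> = (LINT x:S|lborel. (G x)^2)/(2*d) + d/2 * measure lborel S"
    using i2 i3 assms fin by (subst set_integral_add) (auto simp: set_integral_const)
  finally show ?thesis .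
qed


lemma L2sq:
  fixes f g :: "real \<Rightarrow> real"
  shows "(L2dist a b f g)^2 = (LINT w:{a<..<b}|lborel. (f w - g w)^2)"
proof -
  have "0 \<le> (LINT w:{a<..<b}|lborel. (f w - g w)^2)"
    unfolding set_lebesgue_integral_def by (rule Bochner_Integration.integral_nonneg) (auto simp: indicator_def)
  then show ?thesis unfolding L2dist_def by simp
qed

lemma A_diff:
  assumes f: "th t \<in> Y_B B" and f2: "th' t \<in> Y_B B" and B: "B > 0" and eps: "eps > 0" and z: "z \<ge> 0" and d: "d > 0"
  shows "\<bar>A_eps B eps th t z - A_eps B eps th' t z\<bar> \<le> ((L2dist 0 1 (th t) (th' t))^2/(2*d) + d/2)/eps"
proof -
  define G where "G = (\<lambda>x. indicator {0..<1} x *\<^sub>R th t x - indicator {0..<1} x *\<^sub>R th' t x)"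
  have Gm: "G \<in> borel_measurable borel"
    unfolding G_def using Y_B_meas[OF f] Y_B_meas[OF f2] by simp
  have Gb: "\<bar>G x\<bar> \<le> 2*B" for x
    using Y_B_D(2)[OF f, of x] Y_B_D(2)[OF f2, of x] B by (auto simp: G_def indicator_def)
  have hxG: "hx B (th t) x - hx B (th' t) x = G x" for x
    by (auto simp: G_def hx_def indicator_def)
  let ?X = "\<lambda>th. LINT w:{z..z+eps}|lborel. hx B (th t) w"
  have "?X th - ?X th' = (LINT w:{z..z+eps}|lborel. hx B (th t) w - hx B (th' t) w)"
    using set_integral_diff(2)[OF hx_int[OF f B] hx_int[OF f2 B]] by simp
  also have "\<dots> = (LINT w:{z..z+eps}|lborel. G w)" by (simp add: hxG)
  finally have e1: "?X th - ?X th' = (LINT w:{z..z+eps}|lborel. G w)" .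
  have "\<bar>LINT w:{z..z+eps}|lborel. G w\<bar> \<le> (LINT w:{z..z+eps}|lborel. \<bar>G w\<bar>)"
    using set_integral_norm_bound[of lborel "{z..z+eps}" G] si_bdd[OF Gm, of "{z..z+eps}" "2*B"] Gb by simp
  also have "\<dots> \<le> (LINT w:{0..<1}|lborel. \<bar>G w\<bar>)"
    unfolding set_lebesgue_integral_def
  proof (rule integral_mono)
    show "integrable lborel (\<lambda>x. indicat_real {z..z + eps} x *\<^sub>R \<bar>G x\<bar>)"
      using si_bdd[of "\<lambda>x. \<bar>G x\<bar>" "{z..z+eps}" "2*B"] Gm Gb unfolding set_integrable_def by simp
    show "integrable lborel (\<lambda>x. indicat_real {0..<1} x *\<^sub>R \<bar>G x\<bar>)"
      using si_bdd[of "\<lambda>x. \<bar>G x\<bar>" "{0..<1}" "2*B"] Gm Gb unfolding set_integrable_def by simp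
    fix x
    show "indicat_real {z..z + eps} x *\<^sub>R \<bar>G x\<bar> \<le> indicat_real {0..<1} x *\<^sub>R \<bar>G x\<bar>"
      by (auto simp: indicator_def G_def)
  qed
  also have "\<dots> \<le> (LINT x:{0..<1}|lborel. (G x)^2)/(2*d) + d/2 * measure lborel {0..<1::real}"
    by (rule l1_l2[OF Gm]) (use Gb d in auto)
  also have "(LINT x:{0..<1}|lborel. (G x)^2) = (LINT x:{0<..<1}|lborel. (G x)^2)"
    using interval_integral_Ico[of "0::real" 1 "\<lambda>x. (G x)^2"] interval_integral_Ioo[of "ereal 0" "ereal 1" "\<lambda>x. (G x)^2"]
    by simp
  also have "\<dots> = (LINT x:{0<..<1}|lborel. (th t x - th' t x)^2)"
    by (rule set_lebesgue_integral_cong) (auto simp: G_def)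
  also have "\<dots> = (L2dist 0 1 (th t) (th' t))^2" by (simp add: L2sq)
  finally have e2: "\<bar>?X th - ?X th'\<bar> \<le> (L2dist 0 1 (th t) (th' t))^2/(2*d) + d/2"
    unfolding e1 by simp
  have e3: "A_eps B eps th t z - A_eps B eps th' t z = (?X th - ?X th') / eps"
    using A_hx[OF z, of B eps th t] A_hx[OF z, of B eps th' t] by (simp add: diff_divide_distrib)
  have e4: "\<bar>(?X th - ?X th') / eps\<bar> = \<bar>?X th - ?X th'\<bar> / eps" using eps by (simp add: abs_divide)
  show ?thesis unfolding e3 e4 using e2 eps by (simp add: divide_right_mono)
qed



lemma ceil_aux:
  fixes N t c :: real
  assumes "N > 0" "N*t \<le> c" "c < N*t+1"
  shows "t - inverse N \<le> (c-1)/N \<and> (c-1)/N < t"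
proof -
  have a: "t \<le> c/N" using assms by (simp add: pos_le_divide_eq mult.commute)
  have "c/N < (N*t+1)/N" using assms by (simp add: divide_strict_right_mono)
  also have "\<dots> = t + 1/N" using assms by (simp add: field_simps)
  finally have b: "c/N < t + 1/N" .
  show ?thesis using a b by (simp add: diff_divide_distrib inverse_eq_divide)
qed

lemma g_meas:
  assumes "g \<in> X_B T B1"
  shows "(\<lambda>t. if t \<in> {0<..<T} then g t else 0) \<in> borel_measurable borel"
proof -
  define s where "s = (\<lambda>(n::nat) (t::real). (real_of_int \<lceil>real (Suc n) * t\<rceil> - 1) / real (Suc n))"
  define u where "u = (\<lambda>n t. if t \<in> {0<..<T} then
       (\<lambda>k::int. if 0 < (real_of_int k - 1) / real (Suc n) then g ((real_of_int k - 1) / real (Suc n)) else 0)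
          \<lceil>real (Suc n) * t\<rceil> else 0)"
  have um: "u n \<in> borel_measurable borel" for n
  proof -
    let ?phi = "(\<lambda>k::int. if 0 < (real_of_int k - 1) / real (Suc n) then g ((real_of_int k - 1) / real (Suc n)) else 0)"
    have "?phi \<in> count_space UNIV \<rightarrow>\<^sub>M borel" by simp
    then have "(\<lambda>t. ?phi \<lceil>real (Suc n) * t\<rceil>) \<in> borel_measurable borel"
      by measurable
    then show ?thesis unfolding u_def by measurable
  qed
  have sb: "t - inverse (real (Suc n)) \<le> s n t \<and> s n t < t" for n t
  proof -
    have N: "real (Suc n) > 0" by simp
    have c1: "real (Suc n) * t \<le> real_of_int \<lceil>real (Suc n) * t\<rceil>" by (rule le_of_int_ceiling)
    have c2: "real_of_int \<lceil>real (Suc n) * t\<rceil> < real (Suc n) * t + 1" using ceiling_correct[of "real (Suc n) * t"] by linarith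
    show ?thesis using ceil_aux[OF N c1 c2] unfolding s_def by simp
  qed
  have lim: "(\<lambda>n. u n t) \<longlonglongrightarrow> (if t \<in> {0<..<T} then g t else 0)" for t
  proof (cases "t \<in> {0<..<T}")
    case False
    then have "u n t = 0" for n by (auto simp: u_def)
    then show ?thesis using False by auto
  next
    case True
    have st: "(\<lambda>n. s n t) \<longlonglongrightarrow> t"
    proof (rule tendsto_sandwich[where f="\<lambda>n. t - inverse (real (Suc n))" and h="\<lambda>n. t"])
      show "\<forall>\<^sub>F n in sequentially. t - inverse (real (Suc n)) \<le> s n t" using sb by simp
      show "\<forall>\<^sub>F n in sequentially. s n t \<le> t" using sb by (simp add: less_imp_le)
      show "(\<lambda>n. t - inverse (real (Suc n))) \<longlonglongrightarrow> t"
        using tendsto_diff[OF tendsto_const LIMSEQ_inverse_real_of_nat, of t] by simp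
    qed simp
    have sl: "filterlim (\<lambda>n. s n t) (at_left t) sequentially"
      by (rule tendsto_imp_filterlim_at_left[OF st]) (use sb in simp)
    have gt: "(g \<longlongrightarrow> g t) (at_left t)" using assms True by (auto simp: X_B_def)
    have gl: "(\<lambda>n. g (s n t)) \<longlonglongrightarrow> g t" using filterlim_compose[OF gt sl] by simp
    have ev: "eventually (\<lambda>n. 0 < s n t) sequentially"
      using order_tendstoD(1)[OF st, of 0] True by simp
    have "(\<lambda>n. u n t) \<longlonglongrightarrow> g t"
    proof (rule Lim_transform_eventually[OF gl])
      show "\<forall>\<^sub>F n in sequentially. g (s n t) = u n t"
        using ev by eventually_elim (use True in \<open>simp add: u_def s_def\<close>)
    qed
    then show ?thesis using True by simp
  qed
  show ?thesis by (rule borel_measurable_LIMSEQ_real[OF _ um]) (rule lim)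
qed



lemma L2_nonneg: "L2dist a b f g \<ge> 0"
proof -
  have "0 \<le> (LINT w:{a<..<b}|lborel. (f w - g w)^2)"
    unfolding set_lebesgue_integral_def by (rule Bochner_Integration.integral_nonneg) (auto simp: indicator_def)
  then show ?thesis unfolding L2dist_def by simp
qed

lemma A_diff2:
  assumes f: "th t \<in> Y_B B" and f2: "th' t \<in> Y_B B" and B: "B > 0" and eps: "eps > 0" and z: "z \<ge> 0"
  shows "\<bar>A_eps B eps th t z - A_eps B eps th' t z\<bar> \<le> L2dist 0 1 (th t) (th' t) / eps"
proof (cases "L2dist 0 1 (th t) (th' t) > 0")
  case True
  let ?L = "L2dist 0 1 (th t) (th' t)"
  have "\<bar>A_eps B eps th t z - A_eps B eps th' t z\<bar> \<le> (?L^2/(2*?L) + ?L/2)/eps"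
    by (rule A_diff[where th=th and th'=th' and t=t, OF f f2 B eps z True])
  also have "?L^2/(2*?L) + ?L/2 = ?L" using True by (simp add: power2_eq_square field_simps)
  finally show ?thesis .
next
  case False
  then have L0: "L2dist 0 1 (th t) (th' t) = 0" using L2_nonneg[of 0 1 "th t" "th' t"] by simp
  have "\<bar>A_eps B eps th t z - A_eps B eps th' t z\<bar> \<le> 0 + e" if e: "e > 0" for e
  proof -
    have "\<bar>A_eps B eps th t z - A_eps B eps th' t z\<bar> \<le> (0^2/(2*(2*eps*e)) + (2*eps*e)/2)/eps"
      using A_diff[where th=th and th'=th' and t=t and d="2*eps*e", OF f f2 B eps z]  e eps L0 by simp
    also have "\<dots> = e" using eps by simp
    finally show ?thesis by simp
  qed
  then have "\<bar>A_eps B eps th t z - A_eps B eps th' t z\<bar> \<le> 0" by (rule field_le_epsilon)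
  then show ?thesis using L0 by simp
qed

lemma Yspace_D:
  assumes "th \<in> Yspace T B" "t \<in> {0..<T}"
  shows "th t \<in> Y_B B" "e > 0 \<Longrightarrow> \<exists>d>0. \<forall>s\<in>{0..<T}. \<bar>s - t\<bar> < d \<longrightarrow> L2dist 0 1 (th s) (th t) < e"
  using assms by (auto simp: Yspace_def)

definition clmp :: "real \<Rightarrow> real" where "clmp z = max 0 (min 1 z)"

lemma clmp_lip: "\<bar>clmp a - clmp b\<bar> \<le> \<bar>a - b\<bar>" by (auto simp: clmp_def)
lemma maxlip: "\<bar>max 0 a - max 0 b\<bar> \<le> \<bar>a - b::real\<bar>" by auto

lemma Phi_cont:
  assumes th: "th \<in> Yspace T B" and B: "B > 0" and eps: "eps > 0" and T: "T > 0"
  shows "continuous_on ({..<T} \<times> UNIV) (\<lambda>p. A_eps B eps th (max 0 (fst p)) (clmp (snd p)))"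
  unfolding continuous_on_iff
proof (intro ballI allI impI)
  fix p e assume p: "p \<in> {..<T} \<times> (UNIV::real set)" and e: "(0::real) < e"
  define t0 where "t0 = max 0 (fst p)"
  define w0 where "w0 = clmp (snd p)"
  have t0: "t0 \<in> {0..<T}" using p T by (auto simp: t0_def)
  have "\<exists>d>0. \<forall>s\<in>{0..<T}. \<bar>s - t0\<bar> < d \<longrightarrow> L2dist 0 1 (th s) (th t0) < e*eps/2"
    using Yspace_D(2)[OF th t0, of "e*eps/2"] e eps by simp
  then obtain d1 where d1: "d1 > 0" "\<And>s. s\<in>{0..<T} \<Longrightarrow> \<bar>s - t0\<bar> < d1 \<Longrightarrow> L2dist 0 1 (th s) (th t0) < e*eps/2"
    by blast
  define d where "d = min d1 (e*eps/(4*B))"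
  have d: "d > 0" using d1 e eps B by (simp add: d_def)
  show "\<exists>d>0. \<forall>x'\<in>{..<T} \<times> UNIV. dist x' p < d \<longrightarrow>
            dist (A_eps B eps th (max 0 (fst x')) (clmp (snd x'))) (A_eps B eps th (max 0 (fst p)) (clmp (snd p))) < e"
  proof (intro exI[of _ d] conjI d ballI impI)
    fix q assume q: "q \<in> {..<T} \<times> (UNIV::real set)" and dq: "dist q p < d"
    define t1 where "t1 = max 0 (fst q)"
    define w1 where "w1 = clmp (snd q)"
    have t1: "t1 \<in> {0..<T}" using q T by (auto simp: t1_def)
    have dt: "\<bar>t1 - t0\<bar> < d" using maxlip[of "fst q" "fst p"] dist_fst_le[of q p] dq
      unfolding t1_def t0_def dist_real_def by linarith
    have dw: "\<bar>w1 - w0\<bar> < d" using clmp_lip[of "snd q" "snd p"] dist_snd_le[of q p] dq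
      unfolding w1_def w0_def dist_real_def by linarith
    have w0p: "w0 \<ge> 0" "w1 \<ge> 0" by (auto simp: w0_def w1_def clmp_def)
    have "\<bar>A_eps B eps th t1 w1 - A_eps B eps (\<lambda>_. th t0) t1 w1\<bar> \<le> L2dist 0 1 (th t1) (th t0) / eps"
      using A_diff2[of th t1 B "\<lambda>_. th t0" eps w1] Yspace_D(1)[OF th t0] Yspace_D(1)[OF th t1] B eps w0p
      by simp
    also have "\<dots> < (e*eps/2)/eps"
      using d1(2)[OF t1] dt eps unfolding d_def by (intro divide_strict_right_mono) auto
    also have "\<dots> = e/2" using eps by simp
    finally have a1: "\<bar>A_eps B eps th t1 w1 - A_eps B eps th t0 w1\<bar> < e/2"
      by (simp add: A_eps_def)
    have "\<bar>A_eps B eps th t0 w1 - A_eps B eps th t0 w0\<bar> \<le> 2 * B / eps * \<bar>w1 - w0\<bar>"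
      by (rule A_lip) (use Yspace_D(1)[OF th t0] B eps w0p in auto)
    also have "\<dots> < 2 * B / eps * (e*eps/(4*B))"
      using dw B eps by (intro mult_strict_left_mono) (auto simp: d_def)
    also have "\<dots> = e/2" using B eps by (simp add: field_simps)
    finally have a2: "\<bar>A_eps B eps th t0 w1 - A_eps B eps th t0 w0\<bar> < e/2" .
    show "dist (A_eps B eps th (max 0 (fst q)) (clmp (snd q))) (A_eps B eps th (max 0 (fst p)) (clmp (snd p))) < e"
      using a1 a2 unfolding t1_def t0_def w1_def w0_def dist_real_def by linarith
  qed
qed


lemma a_meas:
  assumes th: "th \<in> Yspace T B" and g: "g \<in> X_B T B1" and B: "B > 0" and eps: "eps > 0" and T: "T > 0"
  shows "(\<lambda>t. if t \<in> {0<..<T} then A_eps B eps th t (g t) else 0) \<in> borel_measurable borel"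
proof -
  define S :: "(real \<times> real) set" where "S = {..<T} \<times> UNIV"
  define Psi where "Psi = (\<lambda>p. if p \<in> S then A_eps B eps th (max 0 (fst p)) (clmp (snd p)) else 0)"
  have Sb: "S \<in> sets borel" unfolding S_def by (intro borel_open open_Times) auto
  have Pm: "Psi \<in> borel_measurable borel"
    unfolding Psi_def
    by (rule borel_measurable_continuous_on_if[OF Sb]) (use Phi_cont[OF th B eps T] in \<open>auto simp: S_def\<close>)
  define G where "G = (\<lambda>t. if t \<in> {0<..<T} then g t else 0)"
  have Gm[measurable]: "G \<in> borel_measurable borel" unfolding G_def by (rule g_meas[OF g])
  have "(\<lambda>t. (t, G t)) \<in> borel \<rightarrow>\<^sub>M (borel \<Otimes>\<^sub>M borel)" by measurable
  then have "(\<lambda>t. (t, G t)) \<in> borel \<rightarrow>\<^sub>M borel" by (simp add: borel_prod)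
  from measurable_compose[OF this Pm] have m: "(\<lambda>t. Psi (t, G t)) \<in> borel_measurable borel" .
  have "(\<lambda>t. if t \<in> {0<..<T} then Psi (t, G t) else 0) \<in> borel_measurable borel"
    by (rule measurable_If_set[OF m]) auto
  moreover have "(\<lambda>t. if t \<in> {0<..<T} then Psi (t, G t) else 0) = (\<lambda>t. if t \<in> {0<..<T} then A_eps B eps th t (g t) else 0)"
  proof
    fix t show "(if t \<in> {0<..<T} then Psi (t, G t) else 0) = (if t \<in> {0<..<T} then A_eps B eps th t (g t) else 0)"
    proof (cases "t \<in> {0<..<T}")
      case True
      then have "0 \<le> g t" "g t \<le> 1" using g by (auto simp: X_B_def)
      then have "clmp (g t) = g t" by (simp add: clmp_def)
      then show ?thesis using True by (simp add: Psi_def S_def G_def)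
    qed auto
  qed
  ultimately show ?thesis by simp
qed



lemma meas_fst: "h \<in> borel_measurable borel \<Longrightarrow> (\<lambda>p::real\<times>real. h (fst p)) \<in> borel_measurable borel"
  and meas_snd: "h \<in> borel_measurable borel \<Longrightarrow> (\<lambda>p::real\<times>real. h (snd p)) \<in> borel_measurable borel"
proof -
  assume [measurable]: "h \<in> borel_measurable borel"
  have "(\<lambda>p::real\<times>real. h (fst p)) \<in> borel_measurable (borel \<Otimes>\<^sub>M borel)" by measurable
  then show "(\<lambda>p::real\<times>real. h (fst p)) \<in> borel_measurable borel" by (simp add: borel_prod)
  have "(\<lambda>p::real\<times>real. h (snd p)) \<in> borel_measurable (borel \<Otimes>\<^sub>M borel)" by measurable
  then show "(\<lambda>p::real\<times>real. h (snd p)) \<in> borel_measurable borel" by (simp add: borel_prod)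
qed

lemma sq_sets: "({0<..<T} \<times> {0<..<T} :: (real\<times>real) set) \<in> sets borel"
  by (intro borel_open open_Times) auto

lemma sq_bdd: "bounded ({0<..<T} \<times> {0<..<T} :: (real\<times>real) set)"
  by (intro bounded_Times) auto

lemma fub_gen:
  fixes k :: "real \<Rightarrow> real \<Rightarrow> real"
  assumes int: "set_integrable lborel ({0<..<T} \<times> {0<..<T}) (\<lambda>p. k (fst p) (snd p))"
  shows "(LINT p:{0<..<T} \<times> {0<..<T}|lborel. k (fst p) (snd p)) =
         (\<integral>x. \<integral>y. indicator {0<..<T} x * indicator {0<..<T} y * k x y \<partial>lborel \<partial>lborel)"
proof -
  let ?I = "{0<..<T} :: real set"
  have eq: "(\<lambda>p. indicator (?I \<times> ?I) p *\<^sub>R k (fst p) (snd p)) = (\<lambda>(x,y). indicator ?I x * indicator ?I y * k x y)"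
    by (auto simp: fun_eq_iff indicator_def)
  have i2: "integrable (lborel \<Otimes>\<^sub>M lborel) (\<lambda>(x,y). indicator ?I x * indicator ?I y * k x y)"
    using int unfolding set_integrable_def lborel_prod eq .
  have "(LINT p:?I \<times> ?I|lborel. k (fst p) (snd p)) = integral\<^sup>L (lborel \<Otimes>\<^sub>M lborel) (\<lambda>(x,y). indicator ?I x * indicator ?I y * k x y)"
    unfolding set_lebesgue_integral_def lborel_prod eq ..
  also have "\<dots> = (\<integral>x. \<integral>y. indicator ?I x * indicator ?I y * k x y \<partial>lborel \<partial>lborel)"
    using lborel_pair.integral_fst[OF i2] by simp
  finally show ?thesis .
qed

lemma fub:
  fixes h :: "real \<Rightarrow> real"
  assumes hm: "h \<in> borel_measurable borel" and hb: "\<And>x. \<bar>h x\<bar> \<le> C" and T: "T > 0"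
  shows "(LINT p:{0<..<T} \<times> {0<..<T}|lborel. h (fst p)) = T * (LINT x:{0<..<T}|lborel. h x)"
    and "(LINT p:{0<..<T} \<times> {0<..<T}|lborel. h (snd p)) = T * (LINT x:{0<..<T}|lborel. h x)"
proof -
  let ?I = "{0<..<T} :: real set"
  have mI: "measure lborel ?I = T" using T by simp
  have eI: "emeasure lborel ?I \<noteq> \<infinity>" using T by simp
  have hI: "set_integrable lborel ?I h" by (rule si_bdd[OF hm _ _ hb]) auto
  have "(LINT p:?I \<times> ?I|lborel. h (fst p)) = (\<integral>x. \<integral>y. indicator ?I x * indicator ?I y * h x \<partial>lborel \<partial>lborel)"
    by (rule fub_gen[where k="\<lambda>x y. h x"], rule si_bdd[OF meas_fst[OF hm] sq_bdd sq_sets hb])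
  also have "\<dots> = (\<integral>x. T * (indicator ?I x * h x) \<partial>lborel)"
  proof (rule Bochner_Integration.integral_cong[OF refl])
    fix x
    have "(\<integral>y. indicator ?I x * indicator ?I y * h x \<partial>lborel) = (\<integral>y. indicator ?I y * (indicator ?I x * h x) \<partial>lborel)"
      by (simp add: ac_simps)
    also have "\<dots> = (\<integral>y. indicator ?I y \<partial>lborel) * (indicator ?I x * h x)" by simp
    also have "\<dots> = T * (indicator ?I x * h x)" using eI mI by simp
    finally show "(\<integral>y. indicator ?I x * indicator ?I y * h x \<partial>lborel) = T * (indicator ?I x * h x)" .
  qed
  also have "\<dots> = T * (LINT x:?I|lborel. h x)" by (simp add: set_lebesgue_integral_def)
  finally show "(LINT p:?I \<times> ?I|lborel. h (fst p)) = T * (LINT x:?I|lborel. h x)" .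
  have "(LINT p:?I \<times> ?I|lborel. h (snd p)) = (\<integral>x. \<integral>y. indicator ?I x * indicator ?I y * h y \<partial>lborel \<partial>lborel)"
    by (rule fub_gen[where k="\<lambda>x y. h y"], rule si_bdd[OF meas_snd[OF hm] sq_bdd sq_sets hb])
  also have "\<dots> = (\<integral>x. (LINT y:?I|lborel. h y) * indicator ?I x \<partial>lborel)"
  proof (rule Bochner_Integration.integral_cong[OF refl])
    fix x
    have "(\<integral>y. indicator ?I x * indicator ?I y * h y \<partial>lborel) = (\<integral>y. indicator ?I x * (indicator ?I y * h y) \<partial>lborel)"
      by (simp add: ac_simps)
    also have "\<dots> = indicator ?I x * (\<integral>y. indicator ?I y * h y \<partial>lborel)" by simp
    also have "\<dots> = (LINT y:?I|lborel. h y) * indicator ?I x" by (simp add: set_lebesgue_integral_def)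
    finally show "(\<integral>y. indicator ?I x * indicator ?I y * h y \<partial>lborel) = (LINT y:?I|lborel. h y) * indicator ?I x" .
  qed
  also have "\<dots> = (LINT y:?I|lborel. h y) * T" using eI mI by simp
  finally show "(LINT p:?I \<times> ?I|lborel. h (snd p)) = T * (LINT x:?I|lborel. h x)" by simp
qed


lemma L2_bound:
  assumes f: "f \<in> Y_B B" and f2: "f2 \<in> Y_B B" and B: "B > 0"
  shows "L2dist 0 1 f f2 \<le> 2*B"
proof -
  define G where "G = (\<lambda>x. indicator {0..<1} x *\<^sub>R f x - indicator {0..<1} x *\<^sub>R f2 x)"
  have Gm: "G \<in> borel_measurable borel"
    unfolding G_def using Y_B_meas[OF f] Y_B_meas[OF f2] by simp
  have Gb: "\<bar>G x\<bar> \<le> 2*B" for x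
    using Y_B_D(2)[OF f, of x] Y_B_D(2)[OF f2, of x] B by (auto simp: G_def indicator_def)
  have G2b: "\<bar>(G x)^2\<bar> \<le> (2*B)^2" for x
  proof -
    have "\<bar>G x\<bar>^2 \<le> (2*B)^2" using Gb[of x] by (metis abs_ge_zero power_mono)
    then show ?thesis by simp
  qed
  have G2m: "(\<lambda>x. (G x)^2) \<in> borel_measurable borel" using Gm by simp
  have "(L2dist 0 1 f f2)^2 = (LINT x:{0<..<1}|lborel. (f x - f2 x)^2)" by (rule L2sq)
  also have "\<dots> = (LINT x:{0<..<1}|lborel. (G x)^2)"
    by (rule set_lebesgue_integral_cong) (auto simp: G_def)
  also have "\<dots> \<le> \<bar>LINT x:{0<..<1}|lborel. (G x)^2\<bar>" by simp
  also have "\<dots> \<le> (2*B)^2 * measure lborel {0<..<1::real}"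
    by (rule int_bound) (use G2b emeasure_bounded_finite[of "{0<..<1::real}"] in \<open>auto intro!: si_bdd[where C="(2*B)^2"] G2m\<close>)
  finally have "(L2dist 0 1 f f2)^2 \<le> (2*B)^2" by simp
  then show ?thesis by (rule power2_le_imp_le) (use B in auto)
qed

lemma maxdiff: "\<bar>max 0 (x::real) - max 0 y\<bar> \<le> \<bar>x - y\<bar>" by auto

lemma Fmeas:
  fixes a :: "real \<Rightarrow> real"
  assumes am: "a \<in> borel_measurable borel"
  shows "(\<lambda>p::real\<times>real. if fst p < snd p then max 0 (a (fst p) - a (snd p)) else 0) \<in> borel_measurable borel"
proof -
  have m1: "(\<lambda>p::real\<times>real. a (fst p)) \<in> borel_measurable borel" by (rule meas_fst[OF am])
  have m2: "(\<lambda>p::real\<times>real. a (snd p)) \<in> borel_measurable borel" by (rule meas_snd[OF am])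
  have m3: "(\<lambda>p::real\<times>real. max 0 (a (fst p) - a (snd p))) \<in> borel_measurable borel"
    by (intro borel_measurable_max borel_measurable_diff borel_measurable_const m1 m2)
  have op: "open {p::real\<times>real. fst p < snd p}"
    by (rule open_Collect_less) (intro continuous_intros)+
  have "(\<lambda>p. if p \<in> {p::real\<times>real. fst p < snd p} then max 0 (a (fst p) - a (snd p)) else 0) \<in> borel_measurable borel"
    by (rule measurable_If_set[OF m3 borel_measurable_const]) (use op in \<open>simp add: borel_open\<close>)
  then show ?thesis by simp
qed



theorem lemma6p7:
  fixes T B1 B3 eps :: real
  assumes "T > 0" "B1 > 0" "B3 > 0" "eps > 0"
  shows "\<forall>th\<in>Yspace T B3. \<forall>g\<in>X_B T B1. \<forall>e>0. \<exists>d>0.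
           \<forall>th'\<in>Yspace T B3. \<forall>g'\<in>X_B T B1.
             Ydist T th th' < d \<and> L2dist 0 T g g' < d \<longrightarrow>
             \<bar>I_eps T B3 eps th' g' - I_eps T B3 eps th g\<bar> < e"
proof (intro ballI allI impI)
  note T = assms(1) and B = assms(3) and eps = assms(4)
  fix th g and e :: real
  assume th: "th \<in> Yspace T B3" and g: "g \<in> X_B T B1" and e: "0 < e"
  define K where "K = 2*B3/eps"
  define C where "C = 2*T^2/eps + K*T*(1+T)"
  have K0: "K \<ge> 0" using B eps by (simp add: K_def)
  have C0: "C \<ge> 0" using T eps K0 by (simp add: C_def)
  define d where "d = e/(C+1)"
  have d0: "d > 0" using e C0 by (simp add: d_def)
  have dC: "d*C < e"
  proof -
    have "d*(C+1) = e" using C0 by (simp add: d_def)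
    then show ?thesis using d0 by (simp add: algebra_simps)
  qed
  show "\<exists>d>0. \<forall>th'\<in>Yspace T B3. \<forall>g'\<in>X_B T B1.
             Ydist T th th' < d \<and> L2dist 0 T g g' < d \<longrightarrow>
             \<bar>I_eps T B3 eps th' g' - I_eps T B3 eps th g\<bar> < e"
  proof (intro exI[of _ d] conjI d0 ballI impI)
    fix th' g' assume th': "th' \<in> Yspace T B3" and g': "g' \<in> X_B T B1"
      and H: "Ydist T th th' < d \<and> L2dist 0 T g g' < d"
    let ?I = "{0<..<T} :: real set"
    let ?S = "?I \<times> ?I"
    have thY: "th t \<in> Y_B B3" "th' t \<in> Y_B B3" if "t \<in> ?I" for t
      using Yspace_D(1)[OF th, of t] Yspace_D(1)[OF th', of t] that by auto
    have g01: "0 \<le> g t" "g t \<le> 1" "0 \<le> g' t" "g' t \<le> 1" if "t \<in> ?I" for t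
      using g g' that by (auto simp: X_B_def)
    define a where "a = (\<lambda>t. if t \<in> ?I then A_eps B3 eps th t (g t) else 0)"
    define a' where "a' = (\<lambda>t. if t \<in> ?I then A_eps B3 eps th' t (g' t) else 0)"
    have am: "a \<in> borel_measurable borel" unfolding a_def by (rule a_meas[OF th g B eps T])
    have am': "a' \<in> borel_measurable borel" unfolding a'_def by (rule a_meas[OF th' g' B eps T])
    have ab: "\<bar>a t\<bar> \<le> B3 \<and> \<bar>a' t\<bar> \<le> B3" for t
    proof (cases "t \<in> ?I")
      case True
      show ?thesis using A_bound[where th=th and t=t, OF thY(1)[OF True] B eps g01(1)[OF True]]
          A_bound[where th=th' and t=t, OF thY(2)[OF True] B eps g01(3)[OF True]] True by (simp add: a_def a'_def)
    qed (use B in \<open>auto simp: a_def a'_def\<close>)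
    define G where "G = (\<lambda>t. if t \<in> ?I then g t else 0)"
    define G' where "G' = (\<lambda>t. if t \<in> ?I then g' t else 0)"
    have Gm: "G \<in> borel_measurable borel" unfolding G_def by (rule g_meas[OF g])
    have Gm': "G' \<in> borel_measurable borel" unfolding G'_def by (rule g_meas[OF g'])
    define h where "h = (\<lambda>t. \<bar>G' t - G t\<bar>)"
    have hm: "h \<in> borel_measurable borel" unfolding h_def using Gm Gm' by simp
    have hb: "\<bar>h t\<bar> \<le> 1" for t
      using g01[of t] by (auto simp: h_def G_def G'_def)
    have bdd: "bdd_above ((\<lambda>t. L2dist 0 1 (th t) (th' t)) ` {0..<T})"
      by (rule bdd_aboveI2[where M="2*B3"]) (use L2_bound[OF Yspace_D(1)[OF th] Yspace_D(1)[OF th'] B] in auto)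
    have pw: "\<bar>a' t - a t\<bar> \<le> d/eps + K * h t" if t: "t \<in> ?I" for t
    proof -
      have "\<bar>A_eps B3 eps th t (g' t) - A_eps B3 eps th' t (g' t)\<bar> \<le> L2dist 0 1 (th t) (th' t) / eps"
        by (rule A_diff2) (use thY[OF t] B eps g01[OF t] in auto)
      also have "\<dots> \<le> d / eps"
      proof -
        have "L2dist 0 1 (th t) (th' t) \<le> Ydist T th th'"
          unfolding Ydist_def by (rule cSUP_upper[OF _ bdd]) (use t in auto)
        then show ?thesis using H eps by (intro divide_right_mono) auto
      qed
      finally have p1: "\<bar>A_eps B3 eps th' t (g' t) - A_eps B3 eps th t (g' t)\<bar> \<le> d / eps"
        by (simp add: abs_minus_commute)
      have p2: "\<bar>A_eps B3 eps th t (g' t) - A_eps B3 eps th t (g t)\<bar> \<le> 2 * B3 / eps * \<bar>g' t - g t\<bar>"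
        by (rule A_lip) (use thY[OF t] B eps g01[OF t] in auto)
      have "h t = \<bar>g' t - g t\<bar>" using t by (simp add: h_def G_def G'_def)
      then show ?thesis using p1 p2 t unfolding a_def a'_def K_def by auto
    qed
    define F where "F = (\<lambda>(a::real\<Rightarrow>real) (p::real\<times>real). if fst p < snd p then max 0 (a (fst p) - a (snd p)) else (0::real))"
    have Ieq: "I_eps T B3 eps th g = (LINT p:?S|lborel. F a p)"
      unfolding I_eps_def by (rule set_lebesgue_integral_cong) (auto simp: F_def a_def sq_sets)
    have Ieq': "I_eps T B3 eps th' g' = (LINT p:?S|lborel. F a' p)"
      unfolding I_eps_def by (rule set_lebesgue_integral_cong) (auto simp: F_def a'_def sq_sets)
    have Fb: "\<bar>F a p\<bar> \<le> 2*B3" "\<bar>F a' p\<bar> \<le> 2*B3" for p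
      using ab[of "fst p"] ab[of "snd p"] B by (auto simp: F_def)
    have Fi: "set_integrable lborel ?S (F a)"
      by (rule si_bdd[OF _ sq_bdd sq_sets Fb(1)]) (unfold F_def, rule Fmeas[OF am])
    have Fi': "set_integrable lborel ?S (F a')"
      by (rule si_bdd[OF _ sq_bdd sq_sets Fb(2)]) (unfold F_def, rule Fmeas[OF am'])
    define c where "c = d/eps"
    have hfi: "set_integrable lborel ?S (\<lambda>p. h (fst p))"
      by (rule si_bdd[OF meas_fst[OF hm] sq_bdd sq_sets hb])
    have hsi: "set_integrable lborel ?S (\<lambda>p. h (snd p))"
      by (rule si_bdd[OF meas_snd[OF hm] sq_bdd sq_sets hb])
    have ci: "set_integrable lborel ?S (\<lambda>p. 2*c)"
      by (rule si_bdd[where C="\<bar>2*c\<bar>"]) (auto intro: sq_bdd sq_sets)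
    have kfi: "set_integrable lborel ?S (\<lambda>p. K * h (fst p))" using hfi by simp
    have ksi: "set_integrable lborel ?S (\<lambda>p. K * h (snd p))" using hsi by simp
    have "I_eps T B3 eps th' g' - I_eps T B3 eps th g = (LINT p:?S|lborel. F a' p - F a p)"
      unfolding Ieq Ieq' using set_integral_diff(2)[OF Fi' Fi] by simp
    then have "\<bar>I_eps T B3 eps th' g' - I_eps T B3 eps th g\<bar> \<le> (LINT p:?S|lborel. \<bar>F a' p - F a p\<bar>)"
      using set_integral_norm_bound[OF set_integral_diff(1)[OF Fi' Fi]] by simp
    also have "\<dots> \<le> (LINT p:?S|lborel. 2*c + K * h (fst p) + K * h (snd p))"
    proof (rule set_integral_mono)
      show "set_integrable lborel ?S (\<lambda>p. \<bar>F a' p - F a p\<bar>)"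
        by (rule set_integrable_abs[OF set_integral_diff(1)[OF Fi' Fi]])
      show "set_integrable lborel ?S (\<lambda>p. 2*c + K * h (fst p) + K * h (snd p))"
        using ci kfi ksi by (intro set_integral_add(1)) auto
      fix p assume p: "p \<in> ?S"
      have "\<bar>F a' p - F a p\<bar> \<le> \<bar>a' (fst p) - a (fst p)\<bar> + \<bar>a' (snd p) - a (snd p)\<bar>"
        unfolding F_def using maxdiff[of "a' (fst p) - a' (snd p)" "a (fst p) - a (snd p)"] by auto
      also have "\<dots> \<le> (c + K * h (fst p)) + (c + K * h (snd p))"
        using pw[of "fst p"] pw[of "snd p"] p by (auto simp: c_def)
      finally show "\<bar>F a' p - F a p\<bar> \<le> 2*c + K * h (fst p) + K * h (snd p)" by simp
    qed
    also have "\<dots> = (LINT p:?S|lborel. 2*c) + K * (LINT p:?S|lborel. h (fst p)) + K * (LINT p:?S|lborel. h (snd p))"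
      using ci kfi ksi by (simp add: set_integral_add)
    also have "(LINT p:?S|lborel. 2*c) = T * (T * (2*c))"
    proof -
      have "(LINT p:?S|lborel. 2*c) = T * (LINT x:?I|lborel. 2*c)"
        by (rule fub(1)[where C="\<bar>2*c\<bar>"]) (use T in auto)
      also have "(LINT x:?I|lborel. 2*c) = T * (2*c)" using T by (simp add: set_integral_const)
      finally show ?thesis .
    qed
    also have "(LINT p:?S|lborel. h (fst p)) = T * (LINT x:?I|lborel. h x)"
      by (rule fub(1)[OF hm hb T])
    also have "(LINT p:?S|lborel. h (snd p)) = T * (LINT x:?I|lborel. h x)"
      by (rule fub(2)[OF hm hb T])
    finally have main: "\<bar>I_eps T B3 eps th' g' - I_eps T B3 eps th g\<bar> \<le> T * (T * (2*c)) + 2 * K * T * (LINT x:?I|lborel. h x)"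
      by (simp add: algebra_simps)
    have hint: "(LINT x:?I|lborel. h x) \<le> d/2 + d/2 * T"
    proof -
      have "(LINT x:?I|lborel. h x) \<le> (LINT x:?I|lborel. (G' x - G x)^2)/(2*d) + d/2 * measure lborel ?I"
        unfolding h_def
        by (rule l1_l2[where C=1]) (use Gm Gm' d0 hb in \<open>auto simp: h_def\<close>)
      also have "(LINT x:?I|lborel. (G' x - G x)^2) = (L2dist 0 T g g')^2"
        by (simp add: L2sq, rule set_lebesgue_integral_cong) (auto simp: G_def G'_def power2_commute)
      also have "measure lborel ?I = T" using T by simp
      finally have "(LINT x:?I|lborel. h x) \<le> (L2dist 0 T g g')^2/(2*d) + d/2 * T" .
      moreover have "(L2dist 0 T g g')^2 \<le> d^2"
        using H L2_nonneg[of 0 T g g'] by (intro power_mono) auto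
      then have "(L2dist 0 T g g')^2/(2*d) \<le> d^2/(2*d)" using d0 by (intro divide_right_mono) auto
      moreover have "d^2/(2*d) = d/2" using d0 by (simp add: power2_eq_square)
      ultimately show ?thesis by linarith
    qed
    have "2 * K * T * (LINT x:?I|lborel. h x) \<le> 2 * K * T * (d/2 + d/2 * T)"
      using hint K0 T by (intro mult_left_mono) auto
    then have "\<bar>I_eps T B3 eps th' g' - I_eps T B3 eps th g\<bar> \<le> T * (T * (2*c)) + 2 * K * T * (d/2 + d/2 * T)"
      using main by linarith
    also have "T * (T * (2*c)) + 2 * K * T * (d/2 + d/2 * T) = d * C"
      unfolding C_def c_def by (simp add: field_simps power2_eq_square)
    finally show "\<bar>I_eps T B3 eps th' g' - I_eps T B3 eps th g\<bar> < e" using dC by linarith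
  qed
qed

end
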